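(* Let $H\in(0,1)$, $W$ a fractional Brownian motion with Hurst parameter $H$, $b\in\{2,3,\dots\}$, $n\in\mathbb N$, and $0\le u\le v\le1$ with $ub^n,vb^n\in\mathbb Z$. Then for all real numbers $\mu_1,\dots,\mu_{b^{n+1}}$, $$\sum_{j=1}^{b^{n+1}}|\mu_j|\,\big|\mathbb E[(W(jb^{-n-1})-W((j-1)b^{-n-1}))(W(v)-W(u))]\big|\le\sum_{i=1}^{b^n}\Big(\max_{(i-1)b<j\le ib}|\mu_j|\Big)\big|\mathbb E[(W(ib^{-n})-W((i-1)b^{-n}))(W(v)-W(u))]\big|.$$ *)

theory Defs
  imports "HOL-Probability.Probability"
begin

definition fbm_cov :: "real \<Rightarrow> real \<Rightarrow> real \<Rightarrow> real" where
  "fbm_cov H s t = (\<bar>s\<bar> powr (2*H) + \<bar>t\<bar> powr (2*H) - \<bar>t - s\<bar> powr (2*H)) / 2"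

text \<open>W is a fractional Brownian motion on [0,\<infinity>) with Hurst parameter H on the
  probability space M: a centred Gaussian process (every finite linear combination of
  values is a centred normal variable, possibly degenerate) with covariance fbm_cov H.\<close>
definition is_fbm :: "'a measure \<Rightarrow> real \<Rightarrow> (real \<Rightarrow> 'a \<Rightarrow> real) \<Rightarrow> bool" where
  "is_fbm M H W \<longleftrightarrow>
     prob_space M \<and> 0 < H \<and> H < 1 \<and>
     (\<forall>t\<ge>0. W t \<in> borel_measurable M) \<and>
     (\<forall>s\<ge>0. \<forall>t\<ge>0. integrable M (\<lambda>\<omega>. W s \<omega> * W t \<omega>)) \<and>
     (\<forall>t\<ge>0. integrable M (W t) \<and> integral\<^sup>L M (W t) = 0) \<and>
     (\<forall>s\<ge>0. \<forall>t\<ge>0. integral\<^sup>L M (\<lambda>\<omega>. W s \<omega> * W t \<omega>) = fbm_cov H s t) \<and>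
     (\<forall>(ts::real list) (cs::real list).
        length ts = length cs \<and> (\<forall>t\<in>set ts. t \<ge> 0) \<longrightarrow>
        (let X = (\<lambda>\<omega>. \<Sum>i<length ts. cs ! i * W (ts ! i) \<omega>);
             \<sigma>2 = integral\<^sup>L M (\<lambda>\<omega>. (X \<omega>)\<^sup>2)
         in (\<sigma>2 = 0 \<and> (AE \<omega> in M. X \<omega> = 0)) \<or>
            (\<sigma>2 > 0 \<and> distributed M lborel X (normal_density 0 (sqrt \<sigma>2)))))"

end

theory Submission
  imports Defs
begin
lemma hcont: "p > 0 \<Longrightarrow> d \<ge> 0 \<Longrightarrow> a \<ge> 0 \<Longrightarrow>
  continuous_on {a..b} (\<lambda>x::real. (x+d) powr p - x powr p)"
  by (intro continuous_intros continuous_on_powr') auto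

lemma hderiv: "0 < x \<Longrightarrow> d \<ge> 0 \<Longrightarrow>
  ((\<lambda>x::real. (x+d) powr p - x powr p) has_real_derivative
     p * (x+d) powr (p-1) - p * x powr (p-1)) (at x)"
  by (rule derivative_eq_intros refl | simp)+

lemma h_mono:
  fixes p d x y :: real
  assumes "p > 0" "d \<ge> 0" "0 \<le> x" "x \<le> y"
  shows "(p \<ge> 1 \<longrightarrow> (x+d) powr p - x powr p \<le> (y+d) powr p - y powr p)
       \<and> (p \<le> 1 \<longrightarrow> (y+d) powr p - y powr p \<le> (x+d) powr p - x powr p)"
proof safe
  assume "p \<ge> 1"
  show "(x+d) powr p - x powr p \<le> (y+d) powr p - y powr p"
  proof (rule DERIV_nonneg_imp_increasing_open[OF assms(4)])
    fix z assume z: "x < z" "z < y"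
    show "\<exists>l. ((\<lambda>x::real. (x+d) powr p - x powr p) has_real_derivative l) (at z) \<and> l \<ge> 0"
      apply (rule exI, rule conjI, rule hderiv)
      using z assms \<open>p\<ge>1\<close> by (auto intro!: mult_left_mono powr_mono2)
  qed (use hcont assms in auto)
next
  assume "p \<le> 1"
  show "(y+d) powr p - y powr p \<le> (x+d) powr p - x powr p"
  proof (rule DERIV_nonpos_imp_decreasing_open[OF assms(4)])
    fix z assume z: "x < z" "z < y"
    show "\<exists>l. ((\<lambda>x::real. (x+d) powr p - x powr p) has_real_derivative l) (at z) \<and> l \<le> 0"
      apply (rule exI, rule conjI, rule hderiv)
      using z assms \<open>p\<le>1\<close> by (auto intro!: mult_left_mono powr_mono2')
  qed (use hcont assms in auto)
qed
definition FF :: "real \<Rightarrow> real \<Rightarrow> real \<Rightarrow> real \<Rightarrow> real" where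
  "FF p u v t = (\<bar>v - t\<bar> powr p - \<bar>u - t\<bar> powr p) / 2"

lemma FF_mono:
  assumes p: "p > 0" and uv: "u \<le> v"
    and case3: "t \<le> u \<or> (u \<le> s \<and> t \<le> v) \<or> v \<le> s"
  shows "(\<forall>x y. s \<le> x \<longrightarrow> x \<le> y \<longrightarrow> y \<le> t \<longrightarrow> FF p u v y \<le> FF p u v x)
       \<or> (\<forall>x y. s \<le> x \<longrightarrow> x \<le> y \<longrightarrow> y \<le> t \<longrightarrow> FF p u v x \<le> FF p u v y)"
proof -
  have A: "FF p u v y \<le> FF p u v x \<or> FF p u v x \<le> FF p u v y" for x y by linarith
  consider "t \<le> u" | "u \<le> s" "t \<le> v" | "v \<le> s" using case3 by blast
  then show ?thesis
  proof cases
    case 1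
    have e: "FF p u v x = (((u - x) + (v-u)) powr p - (u - x) powr p) / 2" if "x \<le> u" for x
      using that uv unfolding FF_def by (simp add: abs_of_nonneg)
    show ?thesis
    proof (cases "p \<ge> 1")
      case True
      show ?thesis
        apply (rule disjI1, intro allI impI)
        subgoal for x y
          using h_mono[OF p, of "v-u" "u-y" "u-x"] 1 uv True e[of x] e[of y] by auto
        done
    next
      case False
      show ?thesis
        apply (rule disjI2, intro allI impI)
        subgoal for x y
          using h_mono[OF p, of "v-u" "u-y" "u-x"] 1 uv False e[of x] e[of y] by auto
        done
    qed
  next
    case 2
    show ?thesis
      apply (rule disjI1, intro allI impI)
      subgoal for x y
        unfolding FF_def using 2 p
        by (auto simp: abs_of_nonneg abs_of_nonpos intro!: diff_mono divide_right_mono powr_mono2)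
      done
  next
    case 3
    have e: "FF p u v x = - (((x - v) + (v-u)) powr p - (x - v) powr p) / 2" if "v \<le> x" for x
      using that uv unfolding FF_def by (simp add: abs_of_nonpos)
    show ?thesis
    proof (cases "p \<ge> 1")
      case True
      show ?thesis
        apply (rule disjI1, intro allI impI)
        subgoal for x y
          using h_mono[OF p, of "v-u" "x-v" "y-v"] 3 uv True e[of x] e[of y] by auto
        done
    next
      case False
      show ?thesis
        apply (rule disjI2, intro allI impI)
        subgoal for x y
          using h_mono[OF p, of "v-u" "x-v" "y-v"] 3 uv False e[of x] e[of y] by auto
        done
    qed
  qed
qed

lemma block_sum:
  fixes g :: "nat \<Rightarrow> real"
  shows "(\<Sum>j=1..m*b. g j) = (\<Sum>i=1..m. \<Sum>j\<in>{(i-1)*b<..i*b}. g j)"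
proof (induction m)
  case 0 then show ?case by simp
next
  case (Suc m)
  have "{1..Suc m * b} = {1..m*b} \<union> {m*b<..Suc m * b}" by auto
  then have "(\<Sum>j=1..Suc m*b. g j) = (\<Sum>j=1..m*b. g j) + (\<Sum>j\<in>{m*b<..Suc m * b}. g j)"
    by (simp add: sum.union_disjoint ivl_disj_int)
  then show ?case using Suc by simp
qed

lemma telesc:
  fixes f :: "nat \<Rightarrow> real"
  assumes "a \<le> c"
  shows "(\<Sum>j\<in>{a<..c}. f (j - 1) - f j) = f a - f c"
  using assms
proof (induction c rule: dec_induct)
  case base then show ?case by simp
next
  case (step c)
  have "{a<..Suc c} = insert (Suc c) {a<..c}" using step by auto
  then show ?case using step by simp
qed

lemma fbm_incr_cov:
  assumes fbm: "is_fbm M H W" and "a \<ge> 0" "b \<ge> 0" "u \<ge> 0" "v \<ge> 0"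
  shows "integral\<^sup>L M (\<lambda>\<omega>. (W a \<omega> - W b \<omega>) * (W v \<omega> - W u \<omega>))
       = FF (2*H) u v b - FF (2*H) u v a"
proof -
  have int: "\<And>s t. s \<ge> 0 \<Longrightarrow> t \<ge> 0 \<Longrightarrow> integrable M (\<lambda>\<omega>. W s \<omega> * W t \<omega>)"
    and cov: "\<And>s t. s \<ge> 0 \<Longrightarrow> t \<ge> 0 \<Longrightarrow> integral\<^sup>L M (\<lambda>\<omega>. W s \<omega> * W t \<omega>) = fbm_cov H s t"
    using fbm unfolding is_fbm_def by auto
  have eq: "(\<lambda>\<omega>. (W a \<omega> - W b \<omega>) * (W v \<omega> - W u \<omega>)) =
     (\<lambda>\<omega>. (W a \<omega> * W v \<omega> - W a \<omega> * W u \<omega>) - (W b \<omega> * W v \<omega> - W b \<omega> * W u \<omega>))"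
    by (auto simp: algebra_simps)
  have "integral\<^sup>L M (\<lambda>\<omega>. (W a \<omega> - W b \<omega>) * (W v \<omega> - W u \<omega>))
     = (fbm_cov H a v - fbm_cov H a u) - (fbm_cov H b v - fbm_cov H b u)"
    unfolding eq using assms
    by (subst Bochner_Integration.integral_diff Bochner_Integration.integral_diff | 
        auto intro!: Bochner_Integration.integrable_diff int simp: cov)+
  also have "\<dots> = FF (2*H) u v b - FF (2*H) u v a"
    using assms unfolding fbm_cov_def FF_def by (simp add: abs_minus_commute field_simps)
  finally show ?thesis .
qed

theorem lemma3p7:
  fixes M :: "'a measure" and H :: real and W :: "real \<Rightarrow> 'a \<Rightarrow> real"
    and b n :: nat and u v :: real and \<mu> :: "nat \<Rightarrow> real"
  assumes "0 < H" "H < 1"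
    and "is_fbm M H W"
    and "b \<ge> 2"
    and "0 \<le> u" "u \<le> v" "v \<le> 1"
    and "u * real b ^ n \<in> \<int>" "v * real b ^ n \<in> \<int>"
  shows "(\<Sum>j=1..b^(n+1). \<bar>\<mu> j\<bar> *
            \<bar>integral\<^sup>L M (\<lambda>\<omega>. (W (real j / real b ^ (n+1)) \<omega> - W ((real j - 1) / real b ^ (n+1)) \<omega>)
                                * (W v \<omega> - W u \<omega>))\<bar>)
         \<le> (\<Sum>i=1..b^n. Max {\<bar>\<mu> j\<bar> | j. (i - 1) * b < j \<and> j \<le> i * b} *
            \<bar>integral\<^sup>L M (\<lambda>\<omega>. (W (real i / real b ^ n) \<omega> - W ((real i - 1) / real b ^ n) \<omega>)
                                * (W v \<omega> - W u \<omega>))\<bar>)"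
proof -
  define p where "p = 2*H"
  define F where "F = FF p u v"
  define B where "B = real b ^ n"
  define N where "N = B * real b"
  have Bpos: "B > 0" and Npos: "N > 0" using assms(4) by (auto simp: B_def N_def)
  have pN: "real b ^ (n+1) = N" by (simp add: N_def B_def)
  have p: "p > 0" using assms(1) by (simp add: p_def)
  define f where "f = (\<lambda>j::nat. F (real j / N))"
  define c where "c = (\<lambda>j::nat. f (j - 1) - f j)"
  define C where "C = (\<lambda>i::nat. F ((real i - 1) / B) - F (real i / B))"
  have lhs: "(\<Sum>j=1..b^(n+1). \<bar>\<mu> j\<bar> *
            \<bar>integral\<^sup>L M (\<lambda>\<omega>. (W (real j / real b ^ (n+1)) \<omega> - W ((real j - 1) / real b ^ (n+1)) \<omega>)
                                * (W v \<omega> - W u \<omega>))\<bar>) = (\<Sum>j=1..b^n*b. \<bar>\<mu> j\<bar> * \<bar>c j\<bar>)"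
  proof (rule sum.cong)
    fix j assume j: "j \<in> {1..b^n*b}"
    have "real (j - 1) = real j - 1" using j by auto
    then have "c j = F ((real j - 1) / N) - F (real j / N)" by (simp add: c_def f_def)
    then show "\<bar>\<mu> j\<bar> *
            \<bar>integral\<^sup>L M (\<lambda>\<omega>. (W (real j / real b ^ (n+1)) \<omega> - W ((real j - 1) / real b ^ (n+1)) \<omega>)
                                * (W v \<omega> - W u \<omega>))\<bar> = \<bar>\<mu> j\<bar> * \<bar>c j\<bar>"
      unfolding pN using j Npos assms
      by (subst fbm_incr_cov[OF assms(3)]) (auto simp: F_def p_def)
  qed (simp add: mult.commute)
  have rhs: "\<bar>integral\<^sup>L M (\<lambda>\<omega>. (W (real i / real b ^ n) \<omega> - W ((real i - 1) / real b ^ n) \<omega>)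
                                * (W v \<omega> - W u \<omega>))\<bar> = \<bar>C i\<bar>" if i: "i \<in> {1..b^n}" for i
    unfolding B_def[symmetric] using i Bpos assms
    by (subst fbm_incr_cov[OF assms(3)]) (auto simp: F_def p_def C_def)
  obtain k where k: "u * B = of_int k" using assms(8) unfolding B_def by (auto elim: Ints_cases)
  obtain m where m: "v * B = of_int m" using assms(9) unfolding B_def by (auto elim: Ints_cases)
  have block: "(\<Sum>j\<in>{(i-1)*b<..i*b}. \<bar>\<mu> j\<bar> * \<bar>c j\<bar>)
       \<le> Max {\<bar>\<mu> j\<bar> | j. (i - 1) * b < j \<and> j \<le> i * b} * \<bar>C i\<bar>" if i: "i \<in> {1..b^n}" for i
  proof -
    define Mx where "Mx = Max {\<bar>\<mu> j\<bar> | j. (i - 1) * b < j \<and> j \<le> i * b}"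
    have setEq: "{\<bar>\<mu> j\<bar> | j. (i - 1) * b < j \<and> j \<le> i * b} = (\<lambda>j. \<bar>\<mu> j\<bar>) ` {(i-1)*b<..i*b}"
      by auto
    have muMx: "\<bar>\<mu> j\<bar> \<le> Mx" if "j \<in> {(i-1)*b<..i*b}" for j
      unfolding Mx_def setEq using that by (intro Max_ge) auto
    define s where "s = (real i - 1) / B"
    define t where "t = real i / B"
    have ri: "real (i - 1) = real i - 1" using i by auto
    have inblk: "s \<le> (real j - 1) / N \<and> (real j - 1) / N \<le> real j / N \<and> real j / N \<le> t"
      if j: "j \<in> {(i-1)*b<..i*b}" for j
    proof -
      have j0: "(i-1)*b + 1 \<le> j" "j \<le> i*b" using j by auto
      have j1: "real ((i-1)*b) + 1 \<le> real j" "real j \<le> real (i*b)"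
      proof -
        have "real ((i-1)*b + 1) \<le> real j" using j0(1) by (rule of_nat_mono)
        then show "real ((i-1)*b) + 1 \<le> real j" by simp
        show "real j \<le> real (i*b)" using j0(2) by (rule of_nat_mono)
      qed
      then have j2: "(real i - 1) * real b \<le> real j - 1" "real j \<le> real i * real b"
        using ri by auto
      have "s = (real i - 1) * real b / N" unfolding s_def N_def using assms(4) by simp
      moreover have "t = real i * real b / N" unfolding t_def N_def using assms(4) by simp
      ultimately show ?thesis using j2 Npos by (auto intro: divide_right_mono)
    qed
    have case3: "t \<le> u \<or> (u \<le> s \<and> t \<le> v) \<or> v \<le> s"
    proof -
      have "int i \<le> k \<or> int i - 1 \<ge> k" by arith
      moreover have "int i \<le> m \<or> int i - 1 \<ge> m" by arith
      ultimately have "real i \<le> u * B \<or> (u * B \<le> real i - 1 \<and> real i \<le> v * B) \<or> v * B \<le> real i - 1"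
        unfolding k m by linarith
      then show ?thesis unfolding s_def t_def using Bpos
        by (auto simp: divide_le_eq le_divide_eq)
    qed
    have sgn: "(\<forall>j\<in>{(i-1)*b<..i*b}. c j \<ge> 0) \<or> (\<forall>j\<in>{(i-1)*b<..i*b}. c j \<le> 0)"
    proof -
      have cj: "c j = F ((real j - 1) / N) - F (real j / N)" if "j \<in> {(i-1)*b<..i*b}" for j
      proof -
        have "real (j - 1) = real j - 1" using that by auto
        then show ?thesis by (simp add: c_def f_def)
      qed
      from FF_mono[OF p assms(6) case3] show ?thesis
        unfolding F_def[symmetric]
        using inblk cj by (smt (verit))
    qed
    have abs_sum: "(\<Sum>j\<in>{(i-1)*b<..i*b}. \<bar>c j\<bar>) = \<bar>\<Sum>j\<in>{(i-1)*b<..i*b}. c j\<bar>"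
      using sgn
    proof
      assume h: "\<forall>j\<in>{(i-1)*b<..i*b}. c j \<ge> 0"
      then have "(\<Sum>j\<in>{(i-1)*b<..i*b}. c j) \<ge> 0" using h by (intro sum_nonneg) auto
      then show ?thesis using h by (simp add: abs_of_nonneg)
    next
      assume h: "\<forall>j\<in>{(i-1)*b<..i*b}. c j \<le> 0"
      then have "(\<Sum>j\<in>{(i-1)*b<..i*b}. c j) \<le> 0" using h by (intro sum_nonpos) auto
      then show ?thesis using h by (simp add: sum_negf[symmetric] abs_of_nonpos)
    qed
    have tel: "(\<Sum>j\<in>{(i-1)*b<..i*b}. c j) = C i"
    proof -
      have "(\<Sum>j\<in>{(i-1)*b<..i*b}. c j) = f ((i-1)*b) - f (i*b)"
        unfolding c_def by (rule telesc) simp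
      also have "\<dots> = C i" unfolding f_def C_def N_def using ri assms(4) by simp
      finally show ?thesis .
    qed
    have "(\<Sum>j\<in>{(i-1)*b<..i*b}. \<bar>\<mu> j\<bar> * \<bar>c j\<bar>) \<le> (\<Sum>j\<in>{(i-1)*b<..i*b}. Mx * \<bar>c j\<bar>)"
      by (intro sum_mono mult_right_mono muMx) auto
    also have "\<dots> = Mx * (\<Sum>j\<in>{(i-1)*b<..i*b}. \<bar>c j\<bar>)" by (rule sum_distrib_left[symmetric])
    also have "\<dots> = Mx * \<bar>C i\<bar>" unfolding abs_sum tel ..
    finally show ?thesis unfolding Mx_def .
  qed
  show ?thesis
    unfolding lhs block_sum
  proof (intro sum_mono)
    fix i assume i: "i \<in> {1..b^n}"
    show "(\<Sum>j\<in>{(i-1)*b<..i*b}. \<bar>\<mu> j\<bar> * \<bar>c j\<bar>)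
       \<le> Max {\<bar>\<mu> j\<bar> | j. (i - 1) * b < j \<and> j \<le> i * b} *
            \<bar>integral\<^sup>L M (\<lambda>\<omega>. (W (real i / real b ^ n) \<omega> - W ((real i - 1) / real b ^ n) \<omega>)
                                * (W v \<omega> - W u \<omega>))\<bar>"
      unfolding rhs[OF i] by (rule block[OF i])
  qed
qed

end
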